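(* Let $\theta>1$, let $\eta^n\in\Omega_n$ be arbitrary deterministic configurations, $t\in[0,T]$ and $\lambda>0$. Then $$\limsup_{n\to\infty}\frac1n\log\mathbb P_{\delta_{\eta^n}}\big[\tfrac1nJ^n_{0,1}(t)>\lambda\big]=\limsup_{n\to\infty}\frac1n\log\mathbb P_{\delta_{\eta^n}}\big[\tfrac1nJ^n_{n-1,n}(t)>\lambda\big]=-\infty.$$
   Context: Model: $\Sigma_n=\{1,\dots,n-1\}$, $\Omega_n=\{0,1\}^{\Sigma_n}$, $\alpha,\beta\in(0,1)$, $r_1=\alpha,r_{n-1}=\beta$, $T>0$; $\mathbb P_{\delta_{\eta^n}}$ is the law of the Markov process on $[0,T]$ with generator $n^2\mathcal L_n$, $(\mathcal L_nf)(\eta)=\sum_{x=1}^{n-2}[f(\eta^{x,x+1})-f(\eta)]+n^{-\theta}\sum_{x\in\{1,n-1\}}[r_x(1-\eta(x))+(1-r_x)\eta(x)][f(\sigma^x\eta)-f(\eta)]$ ($\sigma^x\eta$ flips the value at $x$: creation of a particle if $\eta(x)=0$, removal if $\eta(x)=1$), started at $\eta^n$. $J^n_{0,1}(t)$ is the number of particles created at site $1$ minus the number of particles removed at site $1$ (via the boundary flips) during $[0,t]$; $J^n_{n-1,n}(t)$ is the number of particles removed at site $n-1$ minus the number created at site $n-1$ during $[0,t]$. *)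

theory Defs
  imports "HOL-Probability.Probability"
begin

text \<open>Configurations on \<Sigma>_n = {1..n-1} are represented as functions nat \<Rightarrow> bool
  (values outside {1..n-1} are never read nor changed by the dynamics).
  The augmented state is (configuration, J_{0,1}, J_{n-1,n}).\<close>

type_synonym cfg = "nat \<Rightarrow> bool"
type_synonym sst = "cfg \<times> int \<times> int"

definition swap_cfg :: "nat \<Rightarrow> cfg \<Rightarrow> cfg" where
  "swap_cfg x \<eta> = \<eta>(x := \<eta> (Suc x), Suc x := \<eta> x)"

definition flip_cfg :: "nat \<Rightarrow> cfg \<Rightarrow> cfg" where
  "flip_cfg x \<eta> = \<eta>(x := \<not> \<eta> x)"

text \<open>Boundary move; left = True is the term at site 1 (rate r_1 = alpha),
  left = False the term at site n-1 (rate r_{n-1} = beta).  Given that the boundary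
  clock of that term rings (rate n^(2-theta)), the flip happens with probability
  r(1-eta(x)) + (1-r) eta(x).  Creation at site 1 adds 1 to J_{0,1}, removal subtracts 1;
  removal at site n-1 adds 1 to J_{n-1,n}, creation subtracts 1.\<close>

definition bnd_step :: "nat \<Rightarrow> real \<Rightarrow> real \<Rightarrow> bool \<Rightarrow> sst \<Rightarrow> sst pmf" where
  "bnd_step n \<alpha> \<beta> left s =
     (case s of (\<eta>, a, b) \<Rightarrow>
       (let x = (if left then 1 else n - 1);
            r = (if left then \<alpha> else \<beta>);
            c = (if \<eta> x then 1 - r else r);
            d = (if \<eta> x then (-1::int) else 1);
            s' = (flip_cfg x \<eta>, (if left then a + d else a), (if left then b else b - d))
        in map_pmf (\<lambda>f. if f then s' else s) (bernoulli_pmf c)))"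

text \<open>Total clock rate of the uniformized chain: n^2 * unif_M n theta, where
  unif_M n theta = (n-2) + 2 n^(-theta)  (n-2 bulk bonds of rate n^2, two boundary
  clocks of rate n^(2-theta)).\<close>

definition unif_M :: "nat \<Rightarrow> real \<Rightarrow> real" where
  "unif_M n \<theta> = real (n - 2) + 2 * real n powr (-\<theta>)"

definition unif_rate :: "nat \<Rightarrow> real \<Rightarrow> real" where
  "unif_rate n \<theta> = (real n)\<^sup>2 * unif_M n \<theta>"

definition jump_step :: "nat \<Rightarrow> real \<Rightarrow> real \<Rightarrow> real \<Rightarrow> sst \<Rightarrow> sst pmf" where
  "jump_step n \<theta> \<alpha> \<beta> s =
     bind_pmf (bernoulli_pmf (2 * real n powr (-\<theta>) / unif_M n \<theta>))
       (\<lambda>bd. if bd then bind_pmf (bernoulli_pmf (1/2)) (\<lambda>l. bnd_step n \<alpha> \<beta> l s)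
             else map_pmf (\<lambda>x. case s of (\<eta>, a, b) \<Rightarrow> (swap_cfg x \<eta>, a, b))
                    (pmf_of_set {1..n-2}))"

definition jump_iter :: "nat \<Rightarrow> real \<Rightarrow> real \<Rightarrow> real \<Rightarrow> nat \<Rightarrow> sst \<Rightarrow> sst pmf" where
  "jump_iter n \<theta> \<alpha> \<beta> k s = ((\<lambda>p. bind_pmf p (jump_step n \<theta> \<alpha> \<beta>)) ^^ k) (return_pmf s)"

text \<open>Law at time t of the Markov process with generator n^2 L_n started from
  (eta, 0, 0), via uniformization (exact for bounded rates):
  P[X_t \<in> A] = \<Sum>_k e^{-\<Lambda> t} (\<Lambda> t)^k / k! * P[Y_k \<in> A].\<close>

definition proc_prob :: "nat \<Rightarrow> real \<Rightarrow> real \<Rightarrow> real \<Rightarrow> cfg \<Rightarrow> real \<Rightarrow> sst set \<Rightarrow> real" where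
  "proc_prob n \<theta> \<alpha> \<beta> \<eta> t A =
     (\<Sum>k. exp (- unif_rate n \<theta> * t) * (unif_rate n \<theta> * t) ^ k / fact k
           * measure_pmf.prob (jump_iter n \<theta> \<alpha> \<beta> k (\<eta>, 0, 0)) A)"

definition elog :: "real \<Rightarrow> ereal" where
  "elog p = (if p \<le> 0 then -\<infinity> else ereal (ln p))"

end

theory Submission
  imports Defs
begin


definition cur :: "bool \<Rightarrow> sst \<Rightarrow> int" where
  "cur side s = (if side then fst (snd s) else snd (snd s))"

lemma bnd_supp:
  assumes "s' \<in> set_pmf (bnd_step n \<alpha> \<beta> l s)"
  shows "cur side s' \<le> cur side s + 1 \<and> (l \<noteq> side \<longrightarrow> cur side s' = cur side s)"
proof -
  obtain \<eta> a b where s: "s = (\<eta>, a, b)" by (cases s) auto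
  show ?thesis using assms unfolding s bnd_step_def Let_def
    by (auto simp: cur_def split: if_splits)
qed

lemma half_enn: "0 \<le> a \<Longrightarrow> 0 \<le> (b::real) \<Longrightarrow> ennreal a * inverse 2 + ennreal b * inverse 2 = ennreal ((a+b)/2)"
proof -
  assume a: "0 \<le> a" and b: "0 \<le> b"
  have h: "ennreal x * inverse 2 = ennreal (x/2)" if "0 \<le> x" for x :: real
  proof -
    have "ennreal x * inverse 2 = ennreal x / ennreal 2" unfolding divide_ennreal_def by simp
    also have "\<dots> = ennreal (x/2)" using that by (rule divide_ennreal) simp
    finally show ?thesis .
  qed
  show ?thesis using a b by (simp only: h ennreal_plus[symmetric] add_divide_distrib)
qed

lemma supp_bound:
  assumes "\<And>y. y \<in> set_pmf N \<Longrightarrow> h y \<le> B"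
  shows "(\<integral>\<^sup>+y. h y \<partial>measure_pmf N) \<le> B"
proof -
  have "(\<integral>\<^sup>+y. h y \<partial>measure_pmf N) \<le> (\<integral>\<^sup>+y. B \<partial>measure_pmf N)"
    by (intro nn_integral_mono_AE AE_pmfI assms)
  also have "\<dots> = B" by (simp add: measure_pmf.emeasure_space_1)
  finally show ?thesis .
qed

lemma step_bound:
  fixes K :: real
  assumes n: "n \<ge> 3" and K: "K \<ge> 0"
  shows "(\<integral>\<^sup>+s'. ennreal (exp (K * cur side s')) \<partial>measure_pmf (jump_step n \<theta> \<alpha> \<beta> s))
     \<le> ennreal (exp (K * cur side s) * (1 + real n powr (-\<theta>) / unif_M n \<theta> * (exp K - 1)))"
proof -
  define G where "G = exp (K * cur side s)"
  define p where "p = 2 * real n powr (-\<theta>) / unif_M n \<theta>"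
  have M1: "unif_M n \<theta> \<ge> 1 + 2 * real n powr (-\<theta>)" using n unfolding unif_M_def by auto
  have pp: "0 < real n powr (-\<theta>)" using n by simp
  have Mp: "unif_M n \<theta> > 0" using M1 pp by linarith
  have p0: "0 \<le> p" unfolding p_def using Mp pp by simp
  have p1: "p \<le> 1" unfolding p_def using Mp M1 by (simp add: divide_le_eq)
  have bnd: "(\<integral>\<^sup>+s'. ennreal (exp (K * cur side s')) \<partial>measure_pmf (bnd_step n \<alpha> \<beta> l s))
      \<le> ennreal (if l = side then G * exp K else G)" for l
  proof (rule supp_bound)
    fix y assume y: "y \<in> set_pmf (bnd_step n \<alpha> \<beta> l s)"
    from bnd_supp[OF y, of side] show "ennreal (exp (K * cur side y)) \<le> ennreal (if l = side then G * exp K else G)"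
    proof (cases "l = side")
      case True
      with bnd_supp[OF y, of side] have "K * cur side y \<le> K * cur side s + K"
      proof -
        have "real_of_int (cur side y) \<le> real_of_int (cur side s) + 1" using bnd_supp[OF y, of side] by linarith
        then have "K * cur side y \<le> K * (real_of_int (cur side s) + 1)" using K by (rule mult_left_mono)
        then show ?thesis by (simp add: distrib_left)
      qed
      then show ?thesis using True by (auto simp: G_def simp flip: exp_add intro!: ennreal_leI)
    next
      case False
      with bnd_supp[OF y, of side] show ?thesis by (auto simp: G_def)
    qed
  qed
  have T: "(\<integral>\<^sup>+s'. ennreal (exp (K * cur side s')) \<partial>measure_pmf (bind_pmf (bernoulli_pmf (1/2)) (\<lambda>l. bnd_step n \<alpha> \<beta> l s)))
      \<le> ennreal ((G * exp K + G) / 2)"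
  proof -
    have "(\<integral>\<^sup>+s'. ennreal (exp (K * cur side s')) \<partial>measure_pmf (bind_pmf (bernoulli_pmf (1/2)) (\<lambda>l. bnd_step n \<alpha> \<beta> l s)))
       = (\<integral>\<^sup>+l. (\<integral>\<^sup>+s'. ennreal (exp (K * cur side s')) \<partial>measure_pmf (bnd_step n \<alpha> \<beta> l s)) \<partial>measure_pmf (bernoulli_pmf (1/2)))"
      by simp
    also have "\<dots> \<le> (\<integral>\<^sup>+l. ennreal (if l = side then G * exp K else G) \<partial>measure_pmf (bernoulli_pmf (1/2)))"
      by (intro nn_integral_mono bnd)
    also have "\<dots> = ennreal ((G * exp K + G) / 2)"
    proof -
      have G0: "0 \<le> G" by (simp add: G_def)
      have "(\<integral>\<^sup>+l. ennreal (if l = side then G * exp K else G) \<partial>measure_pmf (bernoulli_pmf (1/2)))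
        = ennreal (if True = side then G * exp K else G) * ennreal (1/2) + ennreal (if False = side then G * exp K else G) * ennreal (1 - 1/2)"
        by (rule nn_integral_bernoulli_pmf) auto
      also have "\<dots> = ennreal ((G * exp K + G) / 2)"
        using G0 half_enn[of "G * exp K" G] half_enn[of G "G * exp K"]
        by (cases side) (simp_all add: add.commute)
      finally show ?thesis .
    qed
    finally show ?thesis .
  qed
  have F: "(\<integral>\<^sup>+s'. ennreal (exp (K * cur side s')) \<partial>measure_pmf (map_pmf (\<lambda>x. case s of (\<eta>, a, b) \<Rightarrow> (swap_cfg x \<eta>, a, b))
                    (pmf_of_set {1..n-2}))) \<le> ennreal G"
    by (rule supp_bound) (auto simp: G_def cur_def split: prod.splits)
  have "(\<integral>\<^sup>+s'. ennreal (exp (K * cur side s')) \<partial>measure_pmf (jump_step n \<theta> \<alpha> \<beta> s))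
    = (\<integral>\<^sup>+bd. (\<integral>\<^sup>+s'. ennreal (exp (K * cur side s')) \<partial>measure_pmf (if bd then bind_pmf (bernoulli_pmf (1/2)) (\<lambda>l. bnd_step n \<alpha> \<beta> l s)
             else map_pmf (\<lambda>x. case s of (\<eta>, a, b) \<Rightarrow> (swap_cfg x \<eta>, a, b))
                    (pmf_of_set {1..n-2}))) \<partial>measure_pmf (bernoulli_pmf p))"
    unfolding jump_step_def p_def by simp
  also have "\<dots> \<le> (\<integral>\<^sup>+bd. ennreal (if bd then (G * exp K + G) / 2 else G) \<partial>measure_pmf (bernoulli_pmf p))"
    using T F by (intro nn_integral_mono) auto
  also have "\<dots> = ennreal (if True then (G * exp K + G) / 2 else G) * ennreal p + ennreal (if False then (G * exp K + G) / 2 else G) * ennreal (1 - p)"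
    by (rule nn_integral_bernoulli_pmf) (use p0 p1 in auto)
  also have "\<dots> = ennreal ((G * exp K + G) / 2 * p + G * (1 - p))"
  proof -
    have G0: "0 \<le> G" by (simp add: G_def)
    have A: "0 \<le> (G * exp K + G) / 2" using G0 by simp
    have "ennreal ((G * exp K + G) / 2) * ennreal p = ennreal ((G * exp K + G) / 2 * p)"
      using A p0 by (rule ennreal_mult[symmetric])
    moreover have "ennreal G * ennreal (1 - p) = ennreal (G * (1 - p))"
      using G0 p1 by (intro ennreal_mult[symmetric]) auto
    moreover have "ennreal ((G * exp K + G) / 2 * p) + ennreal (G * (1 - p)) = ennreal ((G * exp K + G) / 2 * p + G * (1 - p))"
      using A p0 p1 G0 by (intro ennreal_plus[symmetric]) auto
    ultimately show ?thesis by simp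
  qed
  also have "\<dots> = ennreal (G * (1 + real n powr (-\<theta>) / unif_M n \<theta> * (exp K - 1)))"
    by (rule arg_cong[where f=ennreal]) (use Mp in \<open>simp add: p_def field_simps\<close>)
  finally show ?thesis unfolding G_def .
qed


lemma iter_bound:
  fixes K :: real
  assumes n: "n \<ge> 3" and K: "K \<ge> 0"
  shows "(\<integral>\<^sup>+s'. ennreal (exp (K * cur side s')) \<partial>measure_pmf (jump_iter n \<theta> \<alpha> \<beta> k s0))
     \<le> ennreal (exp (K * cur side s0) * (1 + real n powr (-\<theta>) / unif_M n \<theta> * (exp K - 1)) ^ k)"
proof (induction k)
  case 0
  then show ?case by (simp add: jump_iter_def)
next
  case (Suc k)
  define c where "c = 1 + real n powr (-\<theta>) / unif_M n \<theta> * (exp K - 1)"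
  have M1: "unif_M n \<theta> \<ge> 1 + 2 * real n powr (-\<theta>)" using n unfolding unif_M_def by auto
  have pp: "0 < real n powr (-\<theta>)" using n by simp
  have Mp: "unif_M n \<theta> > 0" using M1 pp by linarith
  have c1: "c \<ge> 1" unfolding c_def using Mp pp K by simp
  have it: "jump_iter n \<theta> \<alpha> \<beta> (Suc k) s0 = bind_pmf (jump_iter n \<theta> \<alpha> \<beta> k s0) (jump_step n \<theta> \<alpha> \<beta>)"
    by (simp add: jump_iter_def)
  have "(\<integral>\<^sup>+s'. ennreal (exp (K * cur side s')) \<partial>measure_pmf (jump_iter n \<theta> \<alpha> \<beta> (Suc k) s0))
      = (\<integral>\<^sup>+x. (\<integral>\<^sup>+s'. ennreal (exp (K * cur side s')) \<partial>measure_pmf (jump_step n \<theta> \<alpha> \<beta> x)) \<partial>measure_pmf (jump_iter n \<theta> \<alpha> \<beta> k s0))"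
    unfolding it by simp
  also have "\<dots> \<le> (\<integral>\<^sup>+x. ennreal (exp (K * cur side x)) * ennreal c \<partial>measure_pmf (jump_iter n \<theta> \<alpha> \<beta> k s0))"
  proof (intro nn_integral_mono)
    fix x
    have "(\<integral>\<^sup>+s'. ennreal (exp (K * cur side s')) \<partial>measure_pmf (jump_step n \<theta> \<alpha> \<beta> x)) \<le> ennreal (exp (K * cur side x) * c)"
      unfolding c_def by (rule step_bound[OF n K])
    also have "\<dots> = ennreal (exp (K * cur side x)) * ennreal c" using c1 by (intro ennreal_mult) auto
    finally show "(\<integral>\<^sup>+s'. ennreal (exp (K * cur side s')) \<partial>measure_pmf (jump_step n \<theta> \<alpha> \<beta> x)) \<le> ennreal (exp (K * cur side x)) * ennreal c" .
  qed
  also have "\<dots> = (\<integral>\<^sup>+x. ennreal (exp (K * cur side x)) \<partial>measure_pmf (jump_iter n \<theta> \<alpha> \<beta> k s0)) * ennreal c"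
    by (rule nn_integral_multc) simp
  also have "\<dots> \<le> ennreal (exp (K * cur side s0) * c ^ k) * ennreal c"
    using Suc.IH unfolding c_def by (intro mult_right_mono) auto
  also have "\<dots> = ennreal (exp (K * cur side s0) * c ^ Suc k)"
    using c1 by (subst ennreal_mult[symmetric]) (auto simp: mult_ac)
  finally show ?case unfolding c_def .
qed

lemma prob_bound:
  fixes K lam :: real
  assumes n: "n \<ge> 3" and K: "K \<ge> 0"
  shows "measure_pmf.prob (jump_iter n \<theta> \<alpha> \<beta> k (\<eta>, 0, 0)) {s. real_of_int (cur side s) / real n > lam}
     \<le> (1 + real n powr (-\<theta>) / unif_M n \<theta> * (exp K - 1)) ^ k * exp (- (K * lam * n))"
proof -
  define P where "P = jump_iter n \<theta> \<alpha> \<beta> k (\<eta>, 0, 0)"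
  define A where "A = {s. real_of_int (cur side s) / real n > lam}"
  define c where "c = 1 + real n powr (-\<theta>) / unif_M n \<theta> * (exp K - 1)"
  have M1: "unif_M n \<theta> \<ge> 1 + 2 * real n powr (-\<theta>)" using n unfolding unif_M_def by auto
  have pp: "0 < real n powr (-\<theta>)" using n by simp
  have Mp: "unif_M n \<theta> > 0" using M1 pp by linarith
  have c1: "c \<ge> 1" unfolding c_def using Mp pp K by simp
  have np: "real n > 0" using n by simp
  have "ennreal (exp (K * lam * n)) * emeasure P A = (\<integral>\<^sup>+s. ennreal (exp (K * lam * n)) * indicator A s \<partial>measure_pmf P)"
    by (simp add: nn_integral_cmult_indicator)
  also have "\<dots> \<le> (\<integral>\<^sup>+s. ennreal (exp (K * cur side s)) \<partial>measure_pmf P)"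
  proof (intro nn_integral_mono)
    fix s
    show "ennreal (exp (K * lam * n)) * indicator A s \<le> ennreal (exp (K * cur side s))"
    proof (cases "s \<in> A")
      case True
      then have "lam * n < cur side s" unfolding A_def using np by (simp add: pos_less_divide_eq)
      then have "K * (lam * n) \<le> K * cur side s" using K by (intro mult_left_mono) auto
      then show ?thesis using True by (auto intro!: ennreal_leI simp: mult.assoc)
    qed simp
  qed
  also have "\<dots> \<le> ennreal (exp (K * cur side (\<eta>, 0, 0)) * c ^ k)"
    unfolding P_def c_def by (rule iter_bound[OF n K])
  also have "\<dots> = ennreal (c ^ k)" by (simp add: cur_def)
  finally have "ennreal (exp (K * lam * n)) * ennreal (measure_pmf.prob P A) \<le> ennreal (c ^ k)"
    by (simp add: measure_pmf.emeasure_eq_measure)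
  then have "ennreal (exp (K * lam * n) * measure_pmf.prob P A) \<le> ennreal (c ^ k)"
    by (simp add: ennreal_mult)
  then have "exp (K * lam * n) * measure_pmf.prob P A \<le> c ^ k"
    using c1 by (subst (asm) ennreal_le_iff) auto
  then have "measure_pmf.prob P A \<le> c ^ k / exp (K * lam * n)"
    by (simp add: field_simps)
  then show ?thesis unfolding P_def A_def c_def by (simp add: exp_minus field_simps)
qed


lemma alg: "(M::real) > 0 \<Longrightarrow> (rn::real)\<^sup>2 * M * t * (1 + a / M * e - 1) = rn * (rn * a) * t * e"
  by (simp add: field_simps power2_eq_square)
lemma alg2: "(ex::real) * x ^ k / f * (c ^ k * E) = ex * E * ((x * c) ^ k / f)"
  by (simp add: power_mult_distrib)

lemma proc_bound:
  fixes K lam :: real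
  assumes n: "n \<ge> 3" and K: "K \<ge> 0" and t: "t \<ge> 0"
  shows "proc_prob n \<theta> \<alpha> \<beta> \<eta> t {s. real_of_int (cur side s) / real n > lam}
     \<le> exp (real n * real n powr (1 - \<theta>) * t * (exp K - 1) - K * lam * n)"
proof -
  define x where "x = unif_rate n \<theta> * t"
  define c where "c = 1 + real n powr (-\<theta>) / unif_M n \<theta> * (exp K - 1)"
  define E where "E = exp (- (K * lam * n))"
  define A where "A = {s. real_of_int (cur side s) / real n > lam}"
  define P where "P k = measure_pmf.prob (jump_iter n \<theta> \<alpha> \<beta> k (\<eta>, 0, 0)) A" for k
  have M1: "unif_M n \<theta> \<ge> 1 + 2 * real n powr (-\<theta>)" using n unfolding unif_M_def by auto
  have pp: "0 < real n powr (-\<theta>)" using n by simp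
  have Mp: "unif_M n \<theta> > 0" using M1 pp by linarith
  have c1: "c \<ge> 1" unfolding c_def using Mp pp K by simp
  have x0: "x \<ge> 0" unfolding x_def unif_rate_def using Mp t by simp
  have Pb: "P k \<le> c ^ k * E" for k
    unfolding P_def A_def c_def E_def by (rule prob_bound[OF n K])
  have ser: "(\<lambda>k. (x * c) ^ k / fact k) sums exp (x * c)"
    using exp_converges[of "x * c"] by (simp add: divide_inverse mult_ac)
  define g where "g k = exp (- x) * E * ((x * c) ^ k / fact k)" for k
  have gs: "g sums (exp (- x) * E * exp (x * c))"
    unfolding g_def by (rule sums_mult[OF ser])
  define f where "f k = exp (- x) * x ^ k / fact k * P k" for k
  have fle: "f k \<le> g k" for k
  proof -
    have "f k = exp (- x) * x ^ k / fact k * P k" by (simp add: f_def)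
    also have "\<dots> \<le> exp (- x) * x ^ k / fact k * (c ^ k * E)"
      using Pb[of k] x0 by (intro mult_left_mono) auto
    also have "\<dots> = g k" unfolding g_def by (rule alg2)
    finally show ?thesis .
  qed
  have f0: "0 \<le> f k" for k unfolding f_def P_def using x0 by simp
  have gsum: "summable g" using gs by (rule sums_summable)
  have fs: "summable f"
    by (rule summable_comparison_test[OF _ gsum]) (use f0 fle in auto)
  have "proc_prob n \<theta> \<alpha> \<beta> \<eta> t A = suminf f"
    unfolding proc_prob_def f_def P_def x_def by simp
  also have "\<dots> \<le> suminf g" by (rule suminf_le[OF fle fs gsum])
  also have "\<dots> = exp (- x) * E * exp (x * c)" using sums_unique[OF gs] by simp
  also have "\<dots> = exp (- x + - (K * lam * n) + x * c)" unfolding E_def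
    by (simp only: exp_add)
  also have "\<dots> = exp (x * (c - 1) - K * lam * n)"
    by (rule arg_cong[where f=exp]) (simp add: algebra_simps)
  also have "x * (c - 1) = real n * real n powr (1 - \<theta>) * t * (exp K - 1)"
  proof -
    have "real n powr (1 + - \<theta>) = real n powr 1 * real n powr (-\<theta>)"
      by (rule powr_add)
    then have "real n powr (1 - \<theta>) = real n * real n powr (-\<theta>)"
      using n by simp
    show ?thesis unfolding x_def c_def unif_rate_def \<open>real n powr (1 - \<theta>) = _\<close>
      by (rule alg[OF Mp])
  qed
  finally show ?thesis unfolding A_def .
qed


lemma limsup_side:
  fixes lam t \<theta> :: real
  assumes th: "\<theta> > 1" and t: "t \<ge> 0" and lam: "lam > 0"
  shows "limsup (\<lambda>n. ereal (1 / real n) * elog (proc_prob n \<theta> \<alpha> \<beta> (\<eta>n n) t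
             {s. real_of_int (cur side s) / real n > lam})) = -\<infinity>"
proof -
  define X where "X = (\<lambda>n. ereal (1 / real n) * elog (proc_prob n \<theta> \<alpha> \<beta> (\<eta>n n) t
             {s. real_of_int (cur side s) / real n > lam}))"
  have bound: "limsup X \<le> ereal (- K * lam)" if K: "K > 0" for K :: real
  proof -
    define C where "C = t * (exp K - 1)"
    define Y where "Y n = ereal (real n powr (1 - \<theta>) * C - K * lam)" for n :: nat
    have ev: "eventually (\<lambda>n. X n \<le> Y n) sequentially"
      using eventually_ge_at_top[of 3]
    proof (rule eventually_mono)
      fix n :: nat assume n: "n \<ge> 3"
      define p where "p = proc_prob n \<theta> \<alpha> \<beta> (\<eta>n n) t {s. real_of_int (cur side s) / real n > lam}"
      have np: "real n > 0" using n by simp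
      have pb: "p \<le> exp (real n * (real n powr (1 - \<theta>) * C - K * lam))"
      proof -
        have "p \<le> exp (real n * real n powr (1 - \<theta>) * t * (exp K - 1) - K * lam * n)"
          unfolding p_def by (rule proc_bound) (use n K t in auto)
        also have "\<dots> = exp (real n * (real n powr (1 - \<theta>) * C - K * lam))"
          by (rule arg_cong[where f=exp]) (simp add: C_def algebra_simps)
        finally show ?thesis .
      qed
      show "X n \<le> Y n"
      proof (cases "p \<le> 0")
        case True
        then have "X n = -\<infinity>" unfolding X_def p_def[symmetric] elog_def using np by simp
        then show ?thesis by simp
      next
        case False
        then have pp: "p > 0" by simp
        have "ln p \<le> real n * (real n powr (1 - \<theta>) * C - K * lam)"
          using pb pp by (metis ln_exp ln_le_cancel_iff exp_gt_zero)
        then have le: "ln p / real n \<le> real n powr (1 - \<theta>) * C - K * lam"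
          using np by (simp add: pos_divide_le_eq mult.commute)
        have "X n = ereal (ln p / real n)" unfolding X_def p_def[symmetric] elog_def using False
          by simp
        then show ?thesis unfolding Y_def using le by simp
      qed
    qed
    have "((\<lambda>n. real n powr (1 - \<theta>)) \<longlongrightarrow> 0) sequentially"
      by (rule tendsto_neg_powr) (use th in \<open>auto intro: filterlim_real_sequentially\<close>)
    then have "((\<lambda>n. real n powr (1 - \<theta>) * C - K * lam) \<longlongrightarrow> 0 * C - K * lam) sequentially"
      by (intro tendsto_intros)
    then have "(Y \<longlongrightarrow> ereal (- K * lam)) sequentially"
      unfolding Y_def by (intro tendsto_intros) simp
    then have "limsup Y = ereal (- K * lam)" by (intro lim_imp_Limsup) simp_all
    moreover have "limsup X \<le> limsup Y" by (rule Limsup_mono[OF ev])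
    ultimately show ?thesis by simp
  qed
  have "limsup X = -\<infinity>"
  proof (cases "limsup X")
    case (real r)
    define K where "K = (\<bar>r\<bar> + 1) / lam"
    have "K > 0" unfolding K_def using lam by simp
    from bound[OF this] real have "r \<le> - K * lam" by simp
    moreover have "- K * lam = - \<bar>r\<bar> - 1" unfolding K_def using lam by simp
    ultimately show ?thesis by simp
  next
    case PInf
    from bound[of 1] PInf show ?thesis by simp
  qed simp
  then show ?thesis unfolding X_def .
qed


theorem mainTheorem9:
  fixes \<theta> \<alpha> \<beta> T t lam :: real and \<eta>n :: "nat \<Rightarrow> cfg"
  assumes "\<theta> > 1" and "0 < \<alpha>" and "\<alpha> < 1" and "0 < \<beta>" and "\<beta> < 1"
    and "T > 0" and "0 \<le> t" and "t \<le> T" and "lam > 0"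
  shows "limsup (\<lambda>n. ereal (1 / real n) * elog (proc_prob n \<theta> \<alpha> \<beta> (\<eta>n n) t
             {s. real_of_int (fst (snd s)) / real n > lam})) = -\<infinity>
       \<and> limsup (\<lambda>n. ereal (1 / real n) * elog (proc_prob n \<theta> \<alpha> \<beta> (\<eta>n n) t
             {s. real_of_int (snd (snd s)) / real n > lam})) = -\<infinity>"
proof -
  have L: "limsup (\<lambda>n. ereal (1 / real n) * elog (proc_prob n \<theta> \<alpha> \<beta> (\<eta>n n) t
             {s. real_of_int (cur True s) / real n > lam})) = -\<infinity>"
    by (rule limsup_side) (use assms in auto)
  have R: "limsup (\<lambda>n. ereal (1 / real n) * elog (proc_prob n \<theta> \<alpha> \<beta> (\<eta>n n) t
             {s. real_of_int (cur False s) / real n > lam})) = -\<infinity>"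
    by (rule limsup_side) (use assms in auto)
  show ?thesis using L R by (simp add: cur_def)
qed

end
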